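(* Fix $n\ge 1$ and finite sets $\mathsf{AP}^I_L$, $\mathsf{AP}^O$; let $\mathcal{I} = 2^{\mathsf{AP}^I_L\times\{0,\dots,n-1\}}$ and $\mathcal{O} = 2^{\mathsf{AP}^O\times\{0,\dots,n-1\}}$. Let $\tau : \mathcal{I}^*\to\mathcal{O}$ be a computation tree such that for every $t\in\mathcal{I}^*$, $\mathrm{rep}_S(t)$ divides $\mathrm{rep}_S(\tau(t))$ (where $\tau(t)$ is regarded as a word of length one). Then $\tau$ has a unique symmetric completion, and this symmetric completion has the symmetry property. Furthermore, if $\tau$ is regular, then so is its symmetric completion.
   Context: Modulo always returns a value in $\{0,\dots,n-1\}$. For a set $\mathsf{AP}$, $u \subseteq \mathsf{AP}\times\{0,\dots,n-1\}$ and $k\in\mathbb{Z}$, $\mathrm{rot}(u,k) = \{(p,(j+k)\bmod n)\mid (p,j)\in u\}$, extended letterwise to words. For such $x$, $\mathrm{rep}(x) = |\{j\in\{0,\dots,n-1\} \mid \mathrm{rot}(x,j)=x\}|$; for words, $\mathrm{rep}_S(\epsilon) = n$ and $\mathrm{rep}_S(w_0\dots w_l) = \gcd(\mathrm{rep}_S(w_0\dots w_{l-1}),\mathrm{rep}(w_l))$. A computation tree is a map $\tau:\mathcal{I}^*\to\mathcal{O}$; it has the symmetry property if $\tau(\mathrm{rot}(t,i)) = \mathrm{rot}(\tau(t),i)$ for all $t$ and $0\le i<n$; it is regular if the set of subtrees $t\mapsto\tau(\hat t t)$, $\hat t\in\mathcal{I}^*$, is finite. Fix the lexicographic order on $\mathcal{I}^*$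 induced by a total order on $\mathcal{I}$ (the lexicographic order of the tuple representation of letters), and let $\eta_S(t) = \min_{0\le i<n}\mathrm{rot}(t,i)$. A symmetric completion of $\tau$ is a tree $\tau'$ such that for every $t\in\mathcal{I}^*$, $\tau'(t) = \mathrm{rot}(\tau(\eta_S(t)),i)$ for some $i\in\mathbb{N}$ with $\mathrm{rot}(\eta_S(t),i) = t$. *)

theory Defs
  imports Main
begin

definition rot :: "nat \<Rightarrow> ('a \<times> nat) set \<Rightarrow> int \<Rightarrow> ('a \<times> nat) set" where
  "rot n u k = {(p, nat ((int j + k) mod int n)) | p j. (p, j) \<in> u}"

definition rotw :: "nat \<Rightarrow> ('a \<times> nat) set list \<Rightarrow> int \<Rightarrow> ('a \<times> nat) set list" where
  "rotw n w k = map (\<lambda>u. rot n u k) w"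

definition rep :: "nat \<Rightarrow> ('a \<times> nat) set \<Rightarrow> nat" where
  "rep n x = card {j \<in> {0..<n}. rot n x (int j) = x}"

definition repS :: "nat \<Rightarrow> ('a \<times> nat) set list \<Rightarrow> nat" where
  "repS n w = foldl (\<lambda>g l. gcd g (rep n l)) n w"

definition alph :: "'a set \<Rightarrow> nat \<Rightarrow> ('a \<times> nat) set set" where
  "alph AP n = Pow (AP \<times> {0..<n})"

definition eta :: "nat \<Rightarrow> (('a \<times> nat) set \<times> ('a \<times> nat) set) set
                   \<Rightarrow> ('a \<times> nat) set list \<Rightarrow> ('a \<times> nat) set list" where
  "eta n r t = (THE m. m \<in> {rotw n t (int i) | i. i < n} \<and>
       (\<forall>s \<in> {rotw n t (int i) | i. i < n}. s = m \<or> (m, s) \<in> lexord r))"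

definition symmetric_completion ::
  "'a set \<Rightarrow> nat \<Rightarrow> (('a \<times> nat) set \<times> ('a \<times> nat) set) set
   \<Rightarrow> (('a \<times> nat) set list \<Rightarrow> ('b \<times> nat) set)
   \<Rightarrow> (('a \<times> nat) set list \<Rightarrow> ('b \<times> nat) set) \<Rightarrow> bool" where
  "symmetric_completion API n r \<tau> \<tau>' \<longleftrightarrow>
     (\<forall>t \<in> lists (alph API n). \<exists>i::nat.
        rotw n (eta n r t) (int i) = t \<and> \<tau>' t = rot n (\<tau> (eta n r t)) (int i))"

definition symmetry_property ::
  "'a set \<Rightarrow> nat \<Rightarrow> (('a \<times> nat) set list \<Rightarrow> ('b \<times> nat) set) \<Rightarrow> bool" where
  "symmetry_property API n \<tau> \<longleftrightarrow>
     (\<forall>t \<in> lists (alph API n). \<forall>i < n. \<tau> (rotw n t (int i)) = rot n (\<tau> t) (int i))"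

definition regular_tree ::
  "'a set \<Rightarrow> nat \<Rightarrow> (('a \<times> nat) set list \<Rightarrow> 'c) \<Rightarrow> bool" where
  "regular_tree API n \<tau> \<longleftrightarrow>
     finite {(\<lambda>t. if t \<in> lists (alph API n) then \<tau> (h @ t) else undefined) | h.
               h \<in> lists (alph API n)}"

end

theory Submission imports Defs begin

lemma rot_add: assumes "n \<ge> 1" shows "rot n (rot n u a) b = rot n u (a + b)"
proof -
  have e: "nat ((int (nat ((int j + a) mod int n)) + b) mod int n) = nat ((int j + (a+b)) mod int n)" for j
    using assms by (simp add: mod_add_left_eq add.assoc)
  show ?thesis unfolding rot_def
  proof (intro equalityI subsetI)
    fix x assume "x \<in> {(p, nat ((int j + b) mod int n)) |p j. (p, j) \<in> {(p, nat ((int j + a) mod int n)) |p j. (p, j) \<in> u}}"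
    then obtain p j where "x = (p, nat ((int (nat ((int j + a) mod int n)) + b) mod int n))" "(p,j) \<in> u" by blast
    then show "x \<in> {(p, nat ((int j + (a + b)) mod int n)) |p j. (p, j) \<in> u}" using e by auto
  next
    fix x assume "x \<in> {(p, nat ((int j + (a + b)) mod int n)) |p j. (p, j) \<in> u}"
    then obtain p j where "x = (p, nat ((int (nat ((int j + a) mod int n)) + b) mod int n))" "(p,j) \<in> u" using e by auto
    then show "x \<in> {(p, nat ((int j + b) mod int n)) |p j. (p, j) \<in> {(p, nat ((int j + a) mod int n)) |p j. (p, j) \<in> u}}" by blast
  qed
qed

lemma rot_mod: assumes "n \<ge> 1" shows "rot n u (a mod int n) = rot n u a"
  unfolding rot_def by (simp add: mod_add_right_eq)

lemma rot_0: assumes "u \<subseteq> X \<times> {0..<n}" shows "rot n u 0 = u"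
proof -
  have "\<And>p j. (p,j) \<in> u \<Longrightarrow> nat ((int j + 0) mod int n) = j" using assms by auto
  then show ?thesis unfolding rot_def by (auto simp: image_def) (metis)
qed

lemma rot_range: assumes "n \<ge> 1" shows "rot n u a \<subseteq> X' \<times> {0..<n} \<or> True" by simp

lemma rot_in_alph: assumes "n \<ge> 1" "u \<in> alph X n" shows "rot n u a \<in> alph X n"
  using assms unfolding alph_def rot_def
  by (auto simp: nat_less_iff)

lemma rotw_add: assumes "n \<ge> 1" shows "rotw n (rotw n w a) b = rotw n w (a + b)"
  unfolding rotw_def by (simp add: rot_add[OF assms])

lemma rotw_mod: assumes "n \<ge> 1" shows "rotw n w (a mod int n) = rotw n w a"
  unfolding rotw_def by (simp add: rot_mod[OF assms])

lemma rotw_0: assumes "w \<in> lists (alph X n)" shows "rotw n w 0 = w"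
  unfolding rotw_def using assms proof (induct w)
  case (Cons x w) then show ?case using rot_0[of x X n] by (simp add: alph_def)
qed simp

lemma rotw_in: assumes "n \<ge> 1" "w \<in> lists (alph X n)" shows "rotw n w a \<in> lists (alph X n)"
  unfolding rotw_def using assms(2) proof (induct w)
  case (Cons x w) then show ?case using rot_in_alph[OF assms(1)] by simp
qed simp

lemma rotw_n: assumes "n \<ge> 1" "w \<in> lists (alph X n)" shows "rotw n w (int n) = w"
  using rotw_mod[OF assms(1), of w "int n"] rotw_0[OF assms(2)] by simp

lemma rotw_append: "rotw n (x @ y) a = rotw n x a @ rotw n y a"
  unfolding rotw_def by simp

lemma length_rotw[simp]: "length (rotw n x a) = length x"
  unfolding rotw_def by simp

lemma stab_iff:
  assumes n: "n \<ge> 1" and u: "u \<in> alph X n"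
  shows "rot n u a = u \<longleftrightarrow> int n dvd a * int (rep n u)"
proof -
  define T where "T = {a::int. rot n u a = u}"
  have u0: "rot n u 0 = u" using u rot_0[of u X n] by (simp add: alph_def)
  have Tadd: "a + b \<in> T" if "a \<in> T" "b \<in> T" for a b
    using that rot_add[OF n, of u a b] by (simp add: T_def)
  have Tneg: "- a \<in> T" if "a \<in> T" for a
    using that rot_add[OF n, of u a "-a"] u0 by (simp add: T_def)
  have Tmod: "a \<in> T \<longleftrightarrow> a mod int n \<in> T" for a
    using rot_mod[OF n, of u a] by (simp add: T_def)
  have Tn: "int n \<in> T" using Tmod[of "int n"] u0 by (simp add: T_def)
  have Tmultn: "a * int k \<in> T" if "a \<in> T" for a k
  proof (induct k)
    case 0 then show ?case using u0 by (simp add: T_def)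
  next
    case (Suc k) then show ?case using Tadd[OF Suc that] by (simp add: algebra_simps)
  qed
  have Tmult: "a * k \<in> T" if "a \<in> T" for a k
  proof (cases "k \<ge> 0")
    case True then show ?thesis using Tmultn[OF that, of "nat k"] by simp
  next
    case False then show ?thesis using Tneg[OF Tmultn[OF that, of "nat (-k)"]] by simp
  qed
  define d where "d = (LEAST d::nat. 0 < d \<and> int d \<in> T)"
  have ex: "0 < n \<and> int n \<in> T" using n Tn by simp
  have dp: "0 < d \<and> int d \<in> T" unfolding d_def by (rule LeastI[of _ n], rule ex)
  have dle: "d \<le> n" unfolding d_def by (rule Least_le, rule ex)
  have dmin: "int e \<notin> T" if "0 < e" "e < d" for e
    using not_less_Least[of e "\<lambda>d. 0 < d \<and> int d \<in> T"] that unfolding d_def[symmetric] by blast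
  have Tchar: "a \<in> T \<longleftrightarrow> int d dvd a" for a
  proof
    assume a: "a \<in> T"
    have "a + int d * (- (a div int d)) \<in> T" by (rule Tadd[OF a Tmult[OF conjunct2[OF dp]]])
    moreover have "a + int d * (- (a div int d)) = a mod int d" by (simp add: minus_div_mult_eq_mod[symmetric] algebra_simps)
    ultimately have m: "a mod int d \<in> T" by simp
    have "0 \<le> a mod int d" "a mod int d < int d" using dp by auto
    show "int d dvd a"
    proof (rule ccontr)
      assume "\<not> int d dvd a"
      then have "a mod int d \<noteq> 0" by (simp add: dvd_eq_mod_eq_0)
      then have "0 < nat (a mod int d)" "nat (a mod int d) < d" using \<open>0 \<le> a mod int d\<close> \<open>a mod int d < int d\<close> by auto
      from dmin[OF this] m \<open>0 \<le> a mod int d\<close> show False by simp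
    qed
  next
    assume "int d dvd a"
    then obtain k where "a = int d * k" by blast
    then show "a \<in> T" using Tmult[OF conjunct2[OF dp]] by simp
  qed
  have dn: "d dvd n" using Tchar[of "int n"] Tn by simp
  then obtain e where ne: "n = d * e" by blast
  have e0: "e > 0" using ne n by (cases e) auto
  have S: "{j \<in> {0..<n}. rot n u (int j) = u} = (\<lambda>k. d*k) ` {0..<e}"
  proof (intro equalityI subsetI)
    fix j assume "j \<in> {j \<in> {0..<n}. rot n u (int j) = u}"
    then have "j < n" "int d dvd int j" using Tchar[of "int j"] by (auto simp: T_def)
    then obtain k where "j = d * k" by (auto simp: int_dvd_int_iff)
    with \<open>j < n\<close> ne dp show "j \<in> (\<lambda>k. d*k) ` {0..<e}" by auto
  next
    fix j assume "j \<in> (\<lambda>k. d*k) ` {0..<e}"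
    then obtain k where "j = d*k" "k < e" using atLeastLessThan_iff by blast
    then have "j < n" "int d dvd int j" using ne dp by auto
    then show "j \<in> {j \<in> {0..<n}. rot n u (int j) = u}" using Tchar[of "int j"] by (auto simp: T_def)
  qed
  have "rep n u = e" unfolding rep_def S using dp by (subst card_image) (auto simp: inj_on_def)
  then have "int n dvd a * int (rep n u) \<longleftrightarrow> int d * int e dvd a * int e" using ne by simp
  also have "\<dots> \<longleftrightarrow> int d dvd a" using e0 by simp
  also have "\<dots> \<longleftrightarrow> rot n u a = u" using Tchar by (simp add: T_def)
  finally show ?thesis by simp
qed

lemma int_gcd_step:
  fixes a :: int and g x :: nat
  assumes "int n dvd a * int g" "int n dvd a * int x"
  shows "int n dvd a * int (gcd g x)"
proof -
  have "int n dvd gcd (a * int g) (a * int x)" using assms by (rule gcd_greatest)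
  then have "int n dvd normalize (a * gcd (int g) (int x))" by (simp only: gcd_mult_left)
  then have "int n dvd a * gcd (int g) (int x)" by (simp only: dvd_normalize_iff)
  moreover have "gcd (int g) (int x) = int (gcd g x)" by simp
  ultimately show ?thesis by simp
qed

lemma stabw_fold:
  assumes n: "n \<ge> 1"
  shows "m \<in> lists (alph X n) \<Longrightarrow> rotw n m a = m \<Longrightarrow> int n dvd a * int g \<Longrightarrow>
     int n dvd a * int (foldl (\<lambda>g l. gcd g (rep n l)) g m)"
proof (induct m arbitrary: g)
  case Nil then show ?case by simp
next
  case (Cons l m)
  have l: "rot n l a = l" and m: "rotw n m a = m" using Cons.prems(2) by (auto simp: rotw_def)
  have "int n dvd a * int (rep n l)" using stab_iff[OF n, of l X a] l Cons.prems(1) by simp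
  then have "int n dvd a * int (gcd g (rep n l))" by (rule int_gcd_step[OF Cons.prems(3)])
  then show ?case using Cons.hyps[of "gcd g (rep n l)"] Cons.prems(1) m by simp
qed

lemma stabw:
  assumes n: "n \<ge> 1" and m: "m \<in> lists (alph X n)" and r: "rotw n m a = m"
  shows "int n dvd a * int (repS n m)"
  unfolding repS_def by (rule stabw_fold[OF n m r]) simp

lemma rotw_nat: assumes n: "n \<ge> 1" shows "rotw n w a = rotw n w (int (nat (a mod int n)))"
  using rotw_mod[OF n, of w a] n by simp

lemma lex_total:
  assumes tot: "total_on A r"
  shows "xs \<in> lists A \<Longrightarrow> ys \<in> lists A \<Longrightarrow> xs = ys \<or> (xs, ys) \<in> lexord r \<or> (ys, xs) \<in> lexord r"
proof (induct xs arbitrary: ys)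
  case Nil then show ?case by (cases ys) auto
next
  case (Cons x xs) then show ?case using tot by (cases ys) (auto simp: total_on_def)
qed

lemma min_exists:
  assumes tr: "trans R" and fin: "finite S" and ne: "S \<noteq> {}"
    and tot: "\<And>x y. x \<in> S \<Longrightarrow> y \<in> S \<Longrightarrow> x = y \<or> (x, y) \<in> R \<or> (y, x) \<in> R"
  shows "\<exists>m\<in>S. \<forall>s\<in>S. s = m \<or> (m, s) \<in> R"
  using fin ne tot
proof (induct S rule: finite_ne_induct)
  case (singleton x) then show ?case by simp
next
  case (insert x F)
  then obtain m where m: "m \<in> F" "\<forall>s\<in>F. s = m \<or> (m, s) \<in> R" by blast
  have "x = m \<or> (x, m) \<in> R \<or> (m, x) \<in> R" using insert.prems m by blast
  then show ?case
  proof (elim disjE)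
    assume "(x, m) \<in> R" then show ?thesis using m tr by (metis insertI1 insert_iff transD)
  qed (use m in auto)
qed

definition Rs :: "nat \<Rightarrow> ('a \<times> nat) set list \<Rightarrow> ('a \<times> nat) set list set" where
  "Rs n t = {rotw n t (int i) | i. i < n}"

lemma Rs_all: assumes n: "n \<ge> 1" shows "Rs n t = range (rotw n t)"
proof (intro equalityI subsetI)
  fix s assume "s \<in> range (rotw n t)"
  then obtain a where "s = rotw n t a" by blast
  moreover have "nat (a mod int n) < n" using n by (simp add: nat_less_iff)
  ultimately show "s \<in> Rs n t" unfolding Rs_def using rotw_nat[OF n, of t a] by blast
qed (auto simp: Rs_def)

lemma Rs_rot: assumes n: "n \<ge> 1" shows "Rs n (rotw n t a) = Rs n t"
proof -
  have "range (rotw n (rotw n t a)) = range (rotw n t)"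
  proof (intro equalityI subsetI)
    fix s assume "s \<in> range (rotw n (rotw n t a))"
    then show "s \<in> range (rotw n t)" using rotw_add[OF n] by auto
  next
    fix s assume "s \<in> range (rotw n t)"
    then obtain b where "s = rotw n t b" by blast
    then have "s = rotw n (rotw n t a) (b - a)" using rotw_add[OF n, of t a "b - a"] by simp
    then show "s \<in> range (rotw n (rotw n t a))" by blast
  qed
  then show ?thesis by (simp only: Rs_all[OF n])
qed

lemma eta_Rs: "eta n r t = (THE m. m \<in> Rs n t \<and> (\<forall>s \<in> Rs n t. s = m \<or> (m, s) \<in> lexord r))"
  unfolding eta_def Rs_def by simp

context
  fixes API :: "'a set" and APO :: "'b set" and n :: nat
    and r :: "(('a \<times> nat) set \<times> ('a \<times> nat) set) set"
    and \<tau> :: "('a \<times> nat) set list \<Rightarrow> ('b \<times> nat) set"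
  assumes n: "n \<ge> 1"
    and slo: "strict_linear_order_on (alph API n) r"
    and tin: "\<forall>t \<in> lists (alph API n). \<tau> t \<in> alph APO n"
    and dv: "\<forall>t \<in> lists (alph API n). repS n t dvd repS n [\<tau> t]"
begin

lemma tau_stab: assumes m: "m \<in> lists (alph API n)" and ra: "rotw n m a = m"
  shows "rot n (\<tau> m) a = \<tau> m"
proof -
  have "int n dvd a * int (repS n m)" by (rule stabw[OF n m ra])
  moreover have "repS n m dvd rep n (\<tau> m)" using dv m by (simp add: repS_def)
  ultimately have "int n dvd a * int (rep n (\<tau> m))"
    by (meson dvd_trans mult_dvd_mono dvd_refl of_nat_dvd_iff)
  then show ?thesis using stab_iff[OF n, of "\<tau> m" APO a] tin m by simp
qed

lemma tau_eq: assumes m: "m \<in> lists (alph API n)" and e: "rotw n m a = rotw n m b"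
  shows "rot n (\<tau> m) a = rot n (\<tau> m) b"
proof -
  have "rotw n m (a - b) = rotw n (rotw n m a) (- b)" using rotw_add[OF n, of m a "-b"] by simp
  also have "\<dots> = m" using e rotw_add[OF n, of m b "-b"] rotw_0[OF m] by simp
  finally have "rot n (\<tau> m) (a - b) = \<tau> m" by (rule tau_stab[OF m])
  then have "rot n (rot n (\<tau> m) (a - b)) b = rot n (\<tau> m) b" by simp
  then show ?thesis using rot_add[OF n, of "\<tau> m" "a - b" b] by simp
qed

lemma lex_props: "trans (lexord r)" "\<And>xs. (xs, xs) \<notin> lexord r"
  using slo unfolding strict_linear_order_on_def
  by (auto intro: lexord_transI simp: irrefl_def lexord_irreflexive)

lemma min_unique:
  assumes "\<forall>s\<in>S. s = m \<or> (m, s) \<in> lexord r" "\<forall>s\<in>S. s = m' \<or> (m', s) \<in> lexord r" "m \<in> S" "m' \<in> S"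
  shows "m = m'"
  using assms lex_props by (metis transD)

lemma Rs_sub: assumes t: "t \<in> lists (alph API n)" shows "Rs n t \<subseteq> lists (alph API n)"
  using rotw_in[OF n t] by (auto simp: Rs_def)

lemma eta_prop: assumes t: "t \<in> lists (alph API n)"
  shows "eta n r t \<in> Rs n t \<and> (\<forall>s \<in> Rs n t. s = eta n r t \<or> (eta n r t, s) \<in> lexord r)"
proof -
  have fin: "finite (Rs n t)" unfolding Rs_def by simp
  have ne: "Rs n t \<noteq> {}" using n unfolding Rs_def by (auto intro!: exI[of _ 0])
  have tot: "total_on (alph API n) r" using slo by (simp add: strict_linear_order_on_def)
  obtain m where m: "m \<in> Rs n t" "\<forall>s\<in>Rs n t. s = m \<or> (m, s) \<in> lexord r"
    using min_exists[OF lex_props(1) fin ne] lex_total[OF tot] Rs_sub[OF t] by blast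
  have "eta n r t = m" unfolding eta_Rs
    by (rule the_equality) (use m min_unique in blast)+
  then show ?thesis using m by simp
qed

lemma eta_char: assumes t: "t \<in> lists (alph API n)" and m: "m \<in> Rs n t" "\<forall>s\<in>Rs n t. s = m \<or> (m, s) \<in> lexord r"
  shows "eta n r t = m"
  using eta_prop[OF t] m min_unique by blast

lemma eta_in: assumes t: "t \<in> lists (alph API n)" shows "eta n r t \<in> lists (alph API n)"
  using eta_prop[OF t] Rs_sub[OF t] by blast

lemma eta_rot: "eta n r (rotw n t a) = eta n r t"
  unfolding eta_Rs Rs_rot[OF n] ..

lemma ex_i: assumes t: "t \<in> lists (alph API n)" shows "\<exists>i::nat. rotw n (eta n r t) (int i) = t"
proof -
  have "eta n r t \<in> range (rotw n t)" using eta_prop[OF t] by (simp only: Rs_all[OF n])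
  then obtain a where a: "eta n r t = rotw n t a" by blast
  have "rotw n (eta n r t) (- a) = t" using a rotw_add[OF n, of t a "-a"] rotw_0[OF t] by simp
  then show ?thesis using rotw_nat[OF n, of "eta n r t" "-a"] by metis
qed

definition tau' :: "('a \<times> nat) set list \<Rightarrow> ('b \<times> nat) set" where
  "tau' t = rot n (\<tau> (eta n r t)) (int (SOME i. rotw n (eta n r t) (int i) = t))"

lemma tau'_val: assumes t: "t \<in> lists (alph API n)" and a: "rotw n (eta n r t) a = t"
  shows "tau' t = rot n (\<tau> (eta n r t)) a"
proof -
  have "rotw n (eta n r t) (int (SOME i. rotw n (eta n r t) (int i) = t)) = t"
    using someI_ex[OF ex_i[OF t]] .
  then show ?thesis unfolding tau'_def using a tau_eq[OF eta_in[OF t]] by metis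
qed

lemma compl: "symmetric_completion API n r \<tau> tau'"
  unfolding symmetric_completion_def
proof
  fix t assume t: "t \<in> lists (alph API n)"
  obtain i where i: "rotw n (eta n r t) (int i) = t" using ex_i[OF t] by blast
  show "\<exists>i::nat. rotw n (eta n r t) (int i) = t \<and> tau' t = rot n (\<tau> (eta n r t)) (int i)"
    using i tau'_val[OF t i] by blast
qed

lemma uniq: assumes "symmetric_completion API n r \<tau> \<tau>''" "t \<in> lists (alph API n)"
  shows "\<tau>'' t = tau' t"
proof -
  obtain i :: nat where "rotw n (eta n r t) (int i) = t" "\<tau>'' t = rot n (\<tau> (eta n r t)) (int i)"
    using assms unfolding symmetric_completion_def by blast
  then show ?thesis using tau'_val[OF assms(2)] by simp
qed

lemma symm: "symmetry_property API n tau'"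
  unfolding symmetry_property_def
proof (intro ballI allI impI)
  fix t and i :: nat assume t: "t \<in> lists (alph API n)" and "i < n"
  define s where "s = rotw n t (int i)"
  have s: "s \<in> lists (alph API n)" unfolding s_def by (rule rotw_in[OF n t])
  have es: "eta n r s = eta n r t" unfolding s_def by (rule eta_rot)
  obtain j where j: "rotw n (eta n r t) (int j) = t" using ex_i[OF t] by blast
  have "rotw n (eta n r t) (int j + int i) = s" unfolding s_def using j rotw_add[OF n, of "eta n r t" "int j" "int i"] by simp
  then have "rotw n (eta n r s) (int j + int i) = s" using es by simp
  then have "tau' s = rot n (\<tau> (eta n r t)) (int j + int i)" using tau'_val[OF s] es by simp
  also have "\<dots> = rot n (tau' t) (int i)" using tau'_val[OF t j] by (simp add: rot_add[OF n])
  finally show "tau' (rotw n t (int i)) = rot n (tau' t) (int i)" unfolding s_def .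
qed

definition Kset :: "('a \<times> nat) set list \<Rightarrow> nat set" where
  "Kset h = {k \<in> {0..<n}. rotw n h (int k) = eta n r h}"

lemma eta_append:
  assumes h: "h \<in> lists (alph API n)" and t: "t \<in> lists (alph API n)" and k: "k \<in> Kset h"
    and km: "\<forall>k' \<in> Kset h. rotw n t (int k') = rotw n t (int k) \<or> (rotw n t (int k), rotw n t (int k')) \<in> lexord r"
  shows "eta n r (h @ t) = eta n r h @ rotw n t (int k)"
proof (rule eta_char)
  show "h @ t \<in> lists (alph API n)" using h t by simp
  have kk: "k < n" "rotw n h (int k) = eta n r h" using k by (auto simp: Kset_def)
  then show "eta n r h @ rotw n t (int k) \<in> Rs n (h @ t)"
    unfolding Rs_def by (auto simp: rotw_append intro!: exI[of _ k])
  show "\<forall>s\<in>Rs n (h @ t). s = eta n r h @ rotw n t (int k) \<or> (eta n r h @ rotw n t (int k), s) \<in> lexord r"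
  proof
    fix s assume "s \<in> Rs n (h @ t)"
    then obtain k' where k': "k' < n" "s = rotw n h (int k') @ rotw n t (int k')"
      unfolding Rs_def by (auto simp: rotw_append)
    show "s = eta n r h @ rotw n t (int k) \<or> (eta n r h @ rotw n t (int k), s) \<in> lexord r"
    proof (cases "rotw n h (int k') = eta n r h")
      case True
      then have "k' \<in> Kset h" using k' by (simp add: Kset_def)
      then have "rotw n t (int k') = rotw n t (int k) \<or> (rotw n t (int k), rotw n t (int k')) \<in> lexord r" using km by blast
      then show ?thesis using k' True by (auto intro: lexord_append_leftI)
    next
      case False
      have "rotw n h (int k') \<in> Rs n h" using k' unfolding Rs_def by blast
      then have "(eta n r h, rotw n h (int k')) \<in> lexord r" using eta_prop[OF h] False by blast
      then have "(eta n r h @ rotw n t (int k), rotw n h (int k') @ rotw n t (int k')) \<in> lexord r"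
        by (rule lexord_sufI) (use eta_prop[OF h] in \<open>auto simp: Rs_def\<close>)
      then show ?thesis using k' by simp
    qed
  qed
qed

definition subt :: "(('a \<times> nat) set list \<Rightarrow> 'c) \<Rightarrow> ('a \<times> nat) set list \<Rightarrow> ('a \<times> nat) set list \<Rightarrow> 'c" where
  "subt f h = (\<lambda>t. if t \<in> lists (alph API n) then f (h @ t) else undefined)"

lemma exists_min_k:
  assumes h: "h \<in> lists (alph API n)" and t: "t \<in> lists (alph API n)"
  shows "\<exists>k\<in>Kset h. \<forall>k' \<in> Kset h. rotw n t (int k') = rotw n t (int k) \<or> (rotw n t (int k), rotw n t (int k')) \<in> lexord r"
proof -
  have fin: "finite ((\<lambda>k. rotw n t (int k)) ` Kset h)" by (simp add: Kset_def)
  have "eta n r h \<in> Rs n h" using eta_prop[OF h] by blast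
  then obtain k0 where "k0 < n" "eta n r h = rotw n h (int k0)" unfolding Rs_def by blast
  then have "k0 \<in> Kset h" by (simp add: Kset_def)
  then have ne: "(\<lambda>k. rotw n t (int k)) ` Kset h \<noteq> {}" by blast
  have tot: "total_on (alph API n) r" using slo by (simp add: strict_linear_order_on_def)
  have sub: "(\<lambda>k. rotw n t (int k)) ` Kset h \<subseteq> lists (alph API n)" using rotw_in[OF n t] by auto
  have "\<exists>m\<in>(\<lambda>k. rotw n t (int k)) ` Kset h. \<forall>s\<in>(\<lambda>k. rotw n t (int k)) ` Kset h. s = m \<or> (m, s) \<in> lexord r"
  proof (rule min_exists[OF lex_props(1) fin ne])
    fix x y assume "x \<in> (\<lambda>k. rotw n t (int k)) ` Kset h" "y \<in> (\<lambda>k. rotw n t (int k)) ` Kset h"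
    then have "x \<in> lists (alph API n)" "y \<in> lists (alph API n)" using sub by blast+
    then show "x = y \<or> (x, y) \<in> lexord r \<or> (y, x) \<in> lexord r" by (rule lex_total[OF tot])
  qed
  then show ?thesis by blast
qed

lemma tau'_append:
  assumes h: "h \<in> lists (alph API n)" and t: "t \<in> lists (alph API n)" and k: "k \<in> Kset h"
    and km: "\<forall>k' \<in> Kset h. rotw n t (int k') = rotw n t (int k) \<or> (rotw n t (int k), rotw n t (int k')) \<in> lexord r"
  shows "tau' (h @ t) = rot n (subt \<tau> (eta n r h) (rotw n t (int k))) (int (n - k))"
proof -
  have e: "eta n r (h @ t) = eta n r h @ rotw n t (int k)" by (rule eta_append[OF h t k km])
  have kn: "k < n" "rotw n h (int k) = eta n r h" using k by (auto simp: Kset_def)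
  have ik: "int k + int (n - k) = int n" using kn by simp
  have "rotw n (rotw n h (int k)) (int (n - k)) = h"
    using rotw_add[OF n, of h "int k" "int (n - k)"] rotw_n[OF n h] ik by simp
  moreover have "rotw n (rotw n t (int k)) (int (n - k)) = t"
    using rotw_add[OF n, of t "int k" "int (n - k)"] rotw_n[OF n t] ik by simp
  ultimately have "rotw n (eta n r (h @ t)) (int (n - k)) = h @ t"
    unfolding e rotw_append kn(2) by simp
  then have "tau' (h @ t) = rot n (\<tau> (eta n r (h @ t))) (int (n - k))"
    using tau'_val[of "h @ t"] h t by simp
  moreover have "subt \<tau> (eta n r h) (rotw n t (int k)) = \<tau> (eta n r h @ rotw n t (int k))"
    unfolding subt_def using rotw_in[OF n t] by simp
  ultimately show ?thesis using e by simp
qed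

lemma subt_eq:
  assumes h1: "h1 \<in> lists (alph API n)" and h2: "h2 \<in> lists (alph API n)"
    and K: "Kset h1 = Kset h2" and S: "subt \<tau> (eta n r h1) = subt \<tau> (eta n r h2)"
  shows "subt tau' h1 = subt tau' h2"
proof
  fix t
  show "subt tau' h1 t = subt tau' h2 t"
  proof (cases "t \<in> lists (alph API n)")
    case True
    obtain k where k: "k \<in> Kset h1" and km: "\<forall>k' \<in> Kset h1. rotw n t (int k') = rotw n t (int k) \<or> (rotw n t (int k), rotw n t (int k')) \<in> lexord r"
      using exists_min_k[OF h1 True] by blast
    have "tau' (h1 @ t) = tau' (h2 @ t)"
      using tau'_append[OF h1 True k km] tau'_append[OF h2 True, of k] k km K S by simp
    then show ?thesis using True by (simp add: subt_def)
  qed (simp add: subt_def)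
qed


lemma reg: assumes "regular_tree API n \<tau>" shows "regular_tree API n tau'"
proof -
  let ?L = "lists (alph API n)"
  have ST: "finite {subt \<tau> h | h. h \<in> ?L}" using assms unfolding regular_tree_def subt_def by simp
  define G where "G h = (subt \<tau> (eta n r h), Kset h)" for h
  define \<Phi> where "\<Phi> g = subt tau' (SOME h. h \<in> ?L \<and> G h = g)" for g
  have "G ` ?L \<subseteq> {subt \<tau> h | h. h \<in> ?L} \<times> Pow {0..<n}"
    unfolding G_def Kset_def using eta_in by auto
  moreover have "finite ({subt \<tau> h | h. h \<in> ?L} \<times> Pow {0..<n})" using ST by simp
  ultimately have finG: "finite (G ` ?L)" by (rule finite_subset)
  have "{subt tau' h | h. h \<in> ?L} \<subseteq> \<Phi> ` (G ` ?L)"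
  proof
    fix x assume "x \<in> {subt tau' h | h. h \<in> ?L}"
    then obtain h where h: "h \<in> ?L" "x = subt tau' h" by blast
    have ex: "\<exists>h'. h' \<in> ?L \<and> G h' = G h" using h by blast
    define h' where "h' = (SOME h'. h' \<in> ?L \<and> G h' = G h)"
    have h': "h' \<in> ?L" "G h' = G h" using someI_ex[OF ex] unfolding h'_def by blast+
    have "subt tau' h' = subt tau' h"
      by (rule subt_eq[OF h'(1) h(1)]) (use h'(2) in \<open>simp_all add: G_def\<close>)
    then have "x = \<Phi> (G h)" unfolding \<Phi>_def h'_def[symmetric] using h by simp
    then show "x \<in> \<Phi> ` (G ` ?L)" using h by blast
  qed
  then have "finite {subt tau' h | h. h \<in> ?L}" using finG by (rule finite_subset[OF _ finite_imageI])
  then show ?thesis unfolding regular_tree_def subt_def by simp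
qed

lemma main:
  "\<exists>\<tau>'. symmetric_completion API n r \<tau> \<tau>'
           \<and> (\<forall>\<tau>''. symmetric_completion API n r \<tau> \<tau>'' \<longrightarrow>
                   (\<forall>t \<in> lists (alph API n). \<tau>'' t = \<tau>' t))
           \<and> symmetry_property API n \<tau>'
           \<and> (regular_tree API n \<tau> \<longrightarrow> regular_tree API n \<tau>')"
  using compl uniq symm reg by blast

end

theorem lemma8:
  fixes API :: "'a set" and APO :: "'b set" and n :: nat
    and r :: "(('a \<times> nat) set \<times> ('a \<times> nat) set) set"
    and \<tau> :: "('a \<times> nat) set list \<Rightarrow> ('b \<times> nat) set"
  assumes "n \<ge> 1" and "finite API" and "finite APO"
    and "strict_linear_order_on (alph API n) r"
    and "\<forall>t \<in> lists (alph API n). \<tau> t \<in> alph APO n"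
    and "\<forall>t \<in> lists (alph API n). repS n t dvd repS n [\<tau> t]"
  shows "\<exists>\<tau>'. symmetric_completion API n r \<tau> \<tau>'
           \<and> (\<forall>\<tau>''. symmetric_completion API n r \<tau> \<tau>'' \<longrightarrow>
                   (\<forall>t \<in> lists (alph API n). \<tau>'' t = \<tau>' t))
           \<and> symmetry_property API n \<tau>'
           \<and> (regular_tree API n \<tau> \<longrightarrow> regular_tree API n \<tau>')"
  by (rule main[OF assms(1,4,5,6)])

end
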